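(* Let $X$ be a space with a binary normal closed subbase $\mathcal S$, let $Z$ be an arbitrary space, and let $\Phi\colon Z\to X$ be an $\mathcal S$-continuous set-valued map such that each $\Phi(z)\subset X$ is (nonempty and) closed. Then the set-valued map $\Psi\colon Z\to X$, $\Psi(z)=I_{\mathcal S}(\Phi(z))$, has a continuous single-valued selection, i.e. a continuous $h\colon Z\to X$ with $h(z)\in\Psi(z)$ for all $z\in Z$.
   Context: All spaces are Tychonoff; set-valued maps have nonempty values. A family $\mathcal S$ of closed subsets of $X$ is a closed subbase if every closed subset of $X$ is an intersection of finite unions of members of $\mathcal S$. A family of sets is linked if any two members intersect; $\mathcal S$ is binary if every linked subfamily of $\mathcal S$ has nonempty intersection. $\mathcal S$ is normal if for every disjoint $S_0,S_1\in\mathcal S$ there exist $T_0,T_1\in\mathcal S$ with $S_0\cap T_1=\varnothing=T_0\cap S_1$ and $T_0\cup T_1=X$. For $B\subset X$, $I_{\mathcal S}(B)=\bigcap\{S\in\mathcal S:B\subset S\}$. A set-valued map $\Phi\colon Z\to X$ is $\mathcal S$-continuous if for every $S\in\mathcal S$ both $\{z:\Phi(z)\cap(X\setminus S)\neq\varnothing\}$ and $\{z:\Phi(z)\subset X\setminus S\}$ are open in $Z$. *)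

theory Defs
  imports "HOL-Analysis.Analysis"
begin

definition tychonoff_space :: "'a topology \<Rightarrow> bool" where
  "tychonoff_space X \<longleftrightarrow> completely_regular_space X \<and> Hausdorff_space X"

definition closed_subbase :: "'a topology \<Rightarrow> 'a set set \<Rightarrow> bool" where
  "closed_subbase X \<S> \<longleftrightarrow>
     (\<forall>S\<in>\<S>. closedin X S) \<and>
     (\<forall>C. closedin X C \<longrightarrow>
        (\<exists>\<U>. (\<forall>U\<in>\<U>. \<exists>\<F>. finite \<F> \<and> \<F> \<subseteq> \<S> \<and> U = \<Union>\<F>) \<and>
              C = topspace X \<inter> \<Inter>\<U>))"

definition linked :: "'a set set \<Rightarrow> bool" where
  "linked \<F> \<longleftrightarrow> (\<forall>A\<in>\<F>. \<forall>B\<in>\<F>. A \<inter> B \<noteq> {})"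

definition binary_family :: "'a set set \<Rightarrow> bool" where
  "binary_family \<S> \<longleftrightarrow> (\<forall>\<F>. \<F> \<subseteq> \<S> \<and> \<F> \<noteq> {} \<and> linked \<F> \<longrightarrow> \<Inter>\<F> \<noteq> {})"

definition normal_family :: "'a topology \<Rightarrow> 'a set set \<Rightarrow> bool" where
  "normal_family X \<S> \<longleftrightarrow>
     (\<forall>S0\<in>\<S>. \<forall>S1\<in>\<S>. S0 \<inter> S1 = {} \<longrightarrow>
        (\<exists>T0\<in>\<S>. \<exists>T1\<in>\<S>. S0 \<inter> T1 = {} \<and> T0 \<inter> S1 = {} \<and> T0 \<union> T1 = topspace X))"

definition I_S :: "'a topology \<Rightarrow> 'a set set \<Rightarrow> 'a set \<Rightarrow> 'a set" where
  "I_S X \<S> B = topspace X \<inter> \<Inter>{S\<in>\<S>. B \<subseteq> S}"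

definition S_continuous ::
  "'z topology \<Rightarrow> 'a topology \<Rightarrow> 'a set set \<Rightarrow> ('z \<Rightarrow> 'a set) \<Rightarrow> bool" where
  "S_continuous Z X \<S> \<Phi> \<longleftrightarrow>
     (\<forall>S\<in>\<S>. openin Z {z\<in>topspace Z. \<Phi> z \<inter> (topspace X - S) \<noteq> {}} \<and>
             openin Z {z\<in>topspace Z. \<Phi> z \<subseteq> topspace X - S})"

end

theory Submission
  imports Defs
begin

lemma closed_subbaseD:
  assumes "closed_subbase X \<S>" "closedin X C"
  obtains \<U> where "\<forall>U\<in>\<U>. \<exists>\<F>. finite \<F> \<and> \<F> \<subseteq> \<S> \<and> U = \<Union>\<F>"
    "C = topspace X \<inter> \<Inter>\<U>"
proof -
  have "\<forall>C. closedin X C \<longrightarrow>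
        (\<exists>\<U>. (\<forall>U\<in>\<U>. \<exists>\<F>. finite \<F> \<and> \<F> \<subseteq> \<S> \<and> U = \<Union>\<F>) \<and>
              C = topspace X \<inter> \<Inter>\<U>)" using assms(1) unfolding closed_subbase_def by (rule conjunct2)
  from this[rule_format, OF assms(2)] show ?thesis using that by iprover
qed

lemma binaryD:
  assumes "binary_family \<S>" "F \<subseteq> \<S>" "F \<noteq> {}" "linked F"
  shows "\<Inter>F \<noteq> {}"
  using assms unfolding binary_family_def by simp

lemma sep1:
  assumes "closed_subbase X \<S>" "t1_space X" "x \<in> topspace X" "y \<in> topspace X" "x \<noteq> y"
  shows "\<exists>S\<in>\<S>. y \<in> S \<and> x \<notin> S"
proof -
  have "closedin X {y}" using closedin_t1_singleton[OF assms(2,4)] .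
  then obtain \<U> where U: "\<forall>U\<in>\<U>. \<exists>\<F>. finite \<F> \<and> \<F> \<subseteq> \<S> \<and> U = \<Union>\<F>"
    and C: "{y} = topspace X \<inter> \<Inter>\<U>"
    using closed_subbaseD[OF assms(1)] by blast
  have yI: "y \<in> topspace X \<inter> \<Inter>\<U>" by (subst C[symmetric]) simp
  have "x \<notin> topspace X \<inter> \<Inter>\<U>"
  proof
    assume "x \<in> topspace X \<inter> \<Inter>\<U>"
    hence "x \<in> {y}" by (simp only: C)
    thus False using assms(5) by simp
  qed
  then obtain U where UU: "U \<in> \<U>" "x \<notin> U" using assms(3) by blast
  have "y \<in> U" using yI UU(1) by blast
  from bspec[OF U UU(1)] obtain \<F> where F: "finite \<F>" "\<F> \<subseteq> \<S>" "U = \<Union>\<F>" by iprover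
  obtain S where "S \<in> \<F>" "y \<in> S" using \<open>y \<in> U\<close> F(3) by blast
  moreover have "S \<subseteq> U" using calculation(1) F(3) by blast
  ultimately show ?thesis using F(2) UU(2) by blast
qed

lemma sep2:
  assumes "closed_subbase X \<S>" "t1_space X" "binary_family \<S>"
    "x \<in> topspace X" "S \<in> \<S>" "x \<notin> S" "S \<noteq> {}"
  shows "\<exists>T\<in>\<S>. x \<in> T \<and> T \<inter> S = {}"
proof (rule ccontr)
  assume na: "\<not> ?thesis"
  have Scl: "\<forall>S\<in>\<S>. closedin X S" using assms(1) unfolding closed_subbase_def by blast
  have "closedin X {x}" using closedin_t1_singleton[OF assms(2,4)] .
  then obtain \<U> where U: "\<forall>U\<in>\<U>. \<exists>\<F>. finite \<F> \<and> \<F> \<subseteq> \<S> \<and> U = \<Union>\<F>"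
    and C: "{x} = topspace X \<inter> \<Inter>\<U>"
    using closed_subbaseD[OF assms(1)] by blast
  let ?G = "insert S {T\<in>\<S>. x \<in> T}"
  have "linked ?G" unfolding linked_def using na assms(6,7) by auto
  moreover have "?G \<subseteq> \<S>" using assms(5) by blast
  ultimately have "\<Inter>?G \<noteq> {}" using binaryD[OF assms(3)] by blast
  then obtain y where y: "y \<in> \<Inter>?G" by blast
  have yS: "y \<in> S" using y by auto
  have "y \<in> topspace X" using yS Scl assms(5) closedin_subset by blast
  moreover have "y \<in> U" if UU: "U \<in> \<U>" for U
  proof -
    from bspec[OF U UU] obtain \<F> where F: "\<F> \<subseteq> \<S>" "U = \<Union>\<F>" by iprover
    have xI: "x \<in> topspace X \<inter> \<Inter>\<U>" by (subst C[symmetric]) simp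
    have "x \<in> U" using xI UU by blast
    then obtain T where "T \<in> \<F>" "x \<in> T" using F(2) by blast
    hence "y \<in> T" using y F(1) by blast
    thus ?thesis using F(2) \<open>T \<in> \<F>\<close> by blast
  qed
  ultimately have "y \<in> topspace X \<inter> \<Inter>\<U>" by blast
  hence "y \<in> {x}" by (simp only: C)
  thus False using yS assms(6) by simp
qed

lemma sep3:
  assumes "closed_subbase X \<S>" "t1_space X" "binary_family \<S>"
    "x \<in> topspace X" "y \<in> topspace X" "x \<noteq> y"
  shows "\<exists>S0\<in>\<S>. \<exists>S1\<in>\<S>. x \<in> S0 \<and> y \<in> S1 \<and> S0 \<inter> S1 = {}"
proof -
  obtain S where S: "S \<in> \<S>" "y \<in> S" "x \<notin> S" using sep1[OF assms(1,2,4,5,6)] by blast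
  then obtain T where "T \<in> \<S>" "x \<in> T" "T \<inter> S = {}" using sep2[OF assms(1,2,3,4)] by blast
  thus ?thesis using S by blast
qed

definition AF :: "'a set set \<Rightarrow> 'a \<Rightarrow> 'a set \<Rightarrow> 'a set set" where
  "AF \<S> p B = {S\<in>\<S>. p \<in> S \<and> S \<inter> B \<noteq> {}} \<union> {S\<in>\<S>. B \<subseteq> S}"

lemma AF_unique:
  assumes "closed_subbase X \<S>" "t1_space X" "binary_family \<S>" "normal_family X \<S>"
    "B \<subseteq> topspace X" "p \<in> topspace X"
    "x \<in> topspace X" "y \<in> topspace X" "x \<in> \<Inter>(AF \<S> p B)" "y \<in> \<Inter>(AF \<S> p B)"
  shows "x = y"
proof (rule ccontr)
  assume "x \<noteq> y"
  then obtain S0 S1 where S: "S0 \<in> \<S>" "S1 \<in> \<S>" "x \<in> S0" "y \<in> S1" "S0 \<inter> S1 = {}"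
    using sep3[OF assms(1,2,3,7,8) \<open>x \<noteq> y\<close>] by blast
  have "\<exists>T0\<in>\<S>. \<exists>T1\<in>\<S>. S0 \<inter> T1 = {} \<and> T0 \<inter> S1 = {} \<and> T0 \<union> T1 = topspace X"
    using assms(4) S(1,2,5) unfolding normal_family_def by blast
  then obtain T0 T1 where T: "T0 \<in> \<S>" "T1 \<in> \<S>" "S0 \<inter> T1 = {}" "T0 \<inter> S1 = {}"
    "T0 \<union> T1 = topspace X" by blast
  have nT0: "T0 \<notin> AF \<S> p B" using assms(10) S T by blast
  have nT1: "T1 \<notin> AF \<S> p B" using assms(9) S T by blast
  show False
  proof (cases "p \<in> T0")
    case True
    hence "T0 \<inter> B = {}" using nT0 T unfolding AF_def by blast
    hence "B \<subseteq> T1" using T assms(5) by blast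
    thus False using nT1 T unfolding AF_def by blast
  next
    case False
    hence "p \<in> T1" using T assms(6) by blast
    hence "T1 \<inter> B = {}" using nT1 T unfolding AF_def by blast
    hence "B \<subseteq> T0" using T assms(5) by blast
    thus False using nT0 T unfolding AF_def by blast
  qed
qed

lemma AF_exists:
  assumes "closed_subbase X \<S>" "binary_family \<S>"
    "B \<subseteq> topspace X" "B \<noteq> {}" "p \<in> topspace X"
  shows "\<exists>x. x \<in> topspace X \<and> x \<in> \<Inter>(AF \<S> p B)"
proof (cases "AF \<S> p B = {}")
  case True thus ?thesis using assms by auto
next
  case False
  have "linked (AF \<S> p B)" unfolding linked_def
  proof (intro ballI)
    fix A C assume A: "A \<in> AF \<S> p B" and C: "C \<in> AF \<S> p B"
    show "A \<inter> C \<noteq> {}"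
    proof (cases "B \<subseteq> A")
      case True
      then show ?thesis
      proof (cases "B \<subseteq> C")
        case True thus ?thesis using \<open>B \<subseteq> A\<close> assms(4) by blast
      next
        case False thus ?thesis using C \<open>B \<subseteq> A\<close> unfolding AF_def by blast
      qed
    next
      case False
      hence "p \<in> A" "A \<inter> B \<noteq> {}" using A unfolding AF_def by auto
      then show ?thesis
      proof (cases "B \<subseteq> C")
        case True thus ?thesis using \<open>A \<inter> B \<noteq> {}\<close> by blast
      next
        case False hence "p \<in> C" using C unfolding AF_def by auto
        thus ?thesis using \<open>p \<in> A\<close> by blast
      qed
    qed
  qed
  moreover have "AF \<S> p B \<subseteq> \<S>" unfolding AF_def by blast
  ultimately have "\<Inter>(AF \<S> p B) \<noteq> {}" using binaryD[OF assms(2)] False by blast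
  then obtain x where x: "x \<in> \<Inter>(AF \<S> p B)" by blast
  obtain S where "S \<in> AF \<S> p B" using False by blast
  moreover have "S \<subseteq> topspace X" using calculation assms(1) closedin_subset
    unfolding AF_def closed_subbase_def by blast
  ultimately show ?thesis using x by blast
qed

theorem corollary1p2:
  fixes X :: "'a topology" and Z :: "'z topology"
    and \<S> :: "'a set set" and \<Phi> :: "'z \<Rightarrow> 'a set"
  assumes "tychonoff_space X" and "tychonoff_space Z"
    and "closed_subbase X \<S>" and "binary_family \<S>" and "normal_family X \<S>"
    and "S_continuous Z X \<S> \<Phi>"
    and "\<And>z. z \<in> topspace Z \<Longrightarrow> \<Phi> z \<noteq> {} \<and> closedin X (\<Phi> z)"
  shows "\<exists>h. continuous_map Z X h \<and> (\<forall>z\<in>topspace Z. h z \<in> I_S X \<S> (\<Phi> z))"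
proof (cases "topspace Z = {}")
  case True
  hence "Z = trivial_topology" by simp
  thus ?thesis by auto
next
  case False
  then obtain z0 where "z0 \<in> topspace Z" by blast
  hence "topspace X \<noteq> {}" using assms(7) closedin_subset by blast
  then obtain p where p: "p \<in> topspace X" by blast
  have t1: "t1_space X" using assms(1) Hausdorff_imp_t1_space unfolding tychonoff_space_def by blast
  have Scl: "\<forall>S\<in>\<S>. closedin X S" using assms(3) unfolding closed_subbase_def by blast
  have Phi: "\<Phi> z \<subseteq> topspace X" "\<Phi> z \<noteq> {}" if "z \<in> topspace Z" for z
    using assms(7)[OF that] closedin_subset by auto
  define h where "h z = (THE x. x \<in> topspace X \<and> x \<in> \<Inter>(AF \<S> p (\<Phi> z)))" for z
  have hprop: "h z \<in> topspace X \<and> h z \<in> \<Inter>(AF \<S> p (\<Phi> z))" if "z \<in> topspace Z" for z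
  proof -
    have "\<exists>!x. x \<in> topspace X \<and> x \<in> \<Inter>(AF \<S> p (\<Phi> z))"
      using AF_exists[OF assms(3,4) Phi[OF that] p]
        AF_unique[OF assms(3) t1 assms(4,5) Phi(1)[OF that] p] by blast
    thus ?thesis unfolding h_def by (rule theI')
  qed
  have sel: "h z \<in> I_S X \<S> (\<Phi> z)" if "z \<in> topspace Z" for z
    using hprop[OF that] unfolding I_S_def AF_def by blast
  have openS: "openin Z {z \<in> topspace Z. h z \<notin> S}" if SS: "S \<in> \<S>" for S
  proof (cases "S = {}")
    case True thus ?thesis by simp
  next
    case Sne: False
    show ?thesis
  proof (subst openin_subopen, intro ballI)
    fix z assume z: "z \<in> {z \<in> topspace Z. h z \<notin> S}"
    hence zZ: "z \<in> topspace Z" and hS: "h z \<notin> S" by auto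
    obtain T where T: "T \<in> \<S>" "h z \<in> T" "T \<inter> S = {}"
      using sep2[OF assms(3) t1 assms(4) conjunct1[OF hprop[OF zZ]] SS hS Sne] by blast
    have "\<exists>T0\<in>\<S>. \<exists>T1\<in>\<S>. T \<inter> T1 = {} \<and> T0 \<inter> S = {} \<and> T0 \<union> T1 = topspace X"
      using assms(5) that T unfolding normal_family_def by blast
    then obtain T0 T1 where TT: "T0 \<in> \<S>" "T1 \<in> \<S>" "T \<inter> T1 = {}" "T0 \<inter> S = {}"
      "T0 \<union> T1 = topspace X" by blast
    have nT1: "T1 \<notin> AF \<S> p (\<Phi> z)" using hprop[OF zZ] T TT by blast
    have key: "h z' \<notin> S" if "z' \<in> topspace Z" "T0 \<in> AF \<S> p (\<Phi> z')" for z'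
      using hprop[OF that(1)] that(2) TT by blast
    let ?O1 = "{z\<in>topspace Z. \<Phi> z \<inter> (topspace X - T1) \<noteq> {}}"
    let ?O2 = "{z\<in>topspace Z. \<Phi> z \<subseteq> topspace X - T1}"
    have o1: "openin Z ?O1" and o2: "openin Z ?O2"
      using assms(6) TT(2) unfolding S_continuous_def by auto
    show "\<exists>U. openin Z U \<and> z \<in> U \<and> U \<subseteq> {z \<in> topspace Z. h z \<notin> S}"
    proof (cases "p \<in> T1")
      case False
      hence pT0: "p \<in> T0" using TT(5) p by blast
      have "\<not> \<Phi> z \<subseteq> T1" using nT1 TT(2) unfolding AF_def by blast
      hence "z \<in> ?O1" using zZ Phi(1)[OF zZ] by blast
      moreover have "?O1 \<subseteq> {z \<in> topspace Z. h z \<notin> S}"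
      proof
        fix z' assume z': "z' \<in> ?O1"
        hence "T0 \<in> AF \<S> p (\<Phi> z')" using pT0 TT unfolding AF_def by blast
        thus "z' \<in> {z \<in> topspace Z. h z \<notin> S}" using key z' by blast
      qed
      ultimately show ?thesis using o1 by blast
    next
      case True
      hence "T1 \<inter> \<Phi> z = {}" using nT1 TT(2) unfolding AF_def by blast
      moreover have "\<Phi> z \<subseteq> topspace X" using Phi(1)[OF zZ] .
      ultimately have "z \<in> ?O2" using zZ by blast
      moreover have "?O2 \<subseteq> {z \<in> topspace Z. h z \<notin> S}"
      proof
        fix z' assume z': "z' \<in> ?O2"
        hence "\<Phi> z' \<subseteq> T0" using TT by blast
        hence "T0 \<in> AF \<S> p (\<Phi> z')" using TT unfolding AF_def by blast
        thus "z' \<in> {z \<in> topspace Z. h z \<notin> S}" using key z' by blast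
      qed
      ultimately show ?thesis using o2 by blast
    qed
  qed
  qed
  have closedS: "closedin Z {z \<in> topspace Z. h z \<in> S}" if "S \<in> \<S>" for S
  proof -
    have "{z \<in> topspace Z. h z \<in> S} = topspace Z - {z \<in> topspace Z. h z \<notin> S}" by auto
    thus ?thesis using openS[OF that] by auto
  qed
  have "continuous_map Z X h"
    unfolding continuous_map_closedin
  proof (intro conjI allI impI)
    show "h \<in> topspace Z \<rightarrow> topspace X" using hprop by blast
  next
    fix C assume Ccl: "closedin X C"
    have "\<forall>C. closedin X C \<longrightarrow>
        (\<exists>\<U>. (\<forall>U\<in>\<U>. \<exists>\<F>. finite \<F> \<and> \<F> \<subseteq> \<S> \<and> U = \<Union>\<F>) \<and>
              C = topspace X \<inter> \<Inter>\<U>)" using assms(3) unfolding closed_subbase_def by (rule conjunct2)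
    from this[rule_format, OF Ccl] obtain \<U> where U: "\<forall>U\<in>\<U>. \<exists>\<F>. finite \<F> \<and> \<F> \<subseteq> \<S> \<and> U = \<Union>\<F>"
      and C: "C = topspace X \<inter> \<Inter>\<U>" by iprover
    have cU: "closedin Z {z \<in> topspace Z. h z \<in> U}" if "U \<in> \<U>" for U
    proof -
      from bspec[OF U that] obtain \<F> where F: "finite \<F>" "\<F> \<subseteq> \<S>" "U = \<Union>\<F>" by iprover
      have "{z \<in> topspace Z. h z \<in> U} = \<Union>((\<lambda>T. {z \<in> topspace Z. h z \<in> T}) ` \<F>)"
        using F by auto
      moreover have "closedin Z (\<Union>((\<lambda>T. {z \<in> topspace Z. h z \<in> T}) ` \<F>))"
        using F closedS by (intro closedin_Union) auto
      ultimately show ?thesis by simp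
    qed
    have eq: "{z \<in> topspace Z. h z \<in> C} =
       topspace Z \<inter> \<Inter>((\<lambda>U. {z \<in> topspace Z. h z \<in> U}) ` \<U>)"
    proof -
      have "h z \<in> topspace X" if "z \<in> topspace Z" for z using hprop[OF that] by blast
      thus ?thesis using C by blast
    qed
    show "closedin Z {z \<in> topspace Z. h z \<in> C}"
    proof (cases "\<U> = {}")
      case True thus ?thesis using eq by simp
    next
      case False
      thus ?thesis unfolding eq using cU by (intro closedin_Int closedin_INT) auto
    qed
  qed
  with sel show ?thesis by (intro exI[where x=h] conjI ballI)
qed

end
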